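(* Let $n$ be an even positive integer that is not a power of $2$. Let $V=\{v\in\{-1,1\}^n : v_1=1\}$, $P(V)=\{\sum_{v\in W}v : W\subseteq V\}$, $g(V)=\frac12\sum_{v\in V}v$, $\mathbf{1}=(1,\dots,1)\in\mathbb{R}^n$, $M=2^{n-2}-\frac12\binom{n-1}{n/2}$, and $K_M=\{(x_1,\dots,x_n)\in\mathbb{R}^n : x_i\le M\ \forall i\}$. Then \[0\in P(V)-g(V)-\tfrac12\binom{n-1}{n/2}\mathbf{1}\subset K_M.\] *)

theory Defs
  imports Complex_Main
begin

text \<open>Vectors in R^n are represented as functions nat \<Rightarrow> real indexed by {1..n},
  extensional (zero outside {1..n}).\<close>

definition Vset :: "nat \<Rightarrow> (nat \<Rightarrow> real) set" where
  "Vset n = {v. (\<forall>i\<in>{1..n}. v i = -1 \<or> v i = 1) \<and> (\<forall>i. i \<notin> {1..n} \<longrightarrow> v i = 0) \<and> v 1 = 1}"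

definition PV :: "nat \<Rightarrow> (nat \<Rightarrow> real) set" where
  "PV n = {(\<lambda>i. \<Sum>v\<in>W. v i) | W. W \<subseteq> Vset n}"

definition gV :: "nat \<Rightarrow> (nat \<Rightarrow> real)" where
  "gV n = (\<lambda>i. (1/2) * (\<Sum>v\<in>Vset n. v i))"

definition ones :: "nat \<Rightarrow> (nat \<Rightarrow> real)" where
  "ones n = (\<lambda>i. if i \<in> {1..n} then 1 else 0)"

definition KM :: "nat \<Rightarrow> real \<Rightarrow> (nat \<Rightarrow> real) set" where
  "KM n M = {x. \<forall>i\<in>{1..n}. x i \<le> M}"

end

theory Submission
  imports Defs
begin

locale cfg =
  fixes n m :: nat
  assumes ev: "even n" and npos: "0 < n" and modd: "odd m" and m3: "3 \<le> m" and mdvd: "m dvd n"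
begin

definition vec :: "nat set \<Rightarrow> nat \<Rightarrow> real" where
  "vec A = (\<lambda>i. if i \<in> {1..n} then (if i \<in> A then 1 else -1) else 0)"

lemma mle: "m \<le> n" using mdvd npos by (simp add: dvd_imp_le)

lemma vec_compl: "i \<in> {1..n} \<Longrightarrow> vec ({1..n} - A) i = - vec A i"
  by (simp add: vec_def)

lemma vec_pm: "i \<in> {1..n} \<Longrightarrow> vec A i = 1 \<or> vec A i = -1"
  by (simp add: vec_def)

lemma vec_inj: "inj_on vec (Pow {1..n})"
proof (rule inj_onI)
  fix A B assume A: "A \<in> Pow {1..n}" and B: "B \<in> Pow {1..n}" and e: "vec A = vec B"
  show "A = B"
  proof (rule set_eqI)
    fix x
    show "x \<in> A \<longleftrightarrow> x \<in> B"
    proof (cases "x \<in> {1..n}")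
      case True
      then have "vec A x = vec B x" using e by simp
      then show ?thesis using True by (simp add: vec_def split: if_splits)
    next
      case False then show ?thesis using A B by auto
    qed
  qed
qed

lemma Vset_eq: "Vset n = vec ` {A. A \<subseteq> {1..n} \<and> 1 \<in> A}"
proof
  show "vec ` {A. A \<subseteq> {1..n} \<and> 1 \<in> A} \<subseteq> Vset n"
    using npos by (auto simp: Vset_def vec_def)
next
  show "Vset n \<subseteq> vec ` {A. A \<subseteq> {1..n} \<and> 1 \<in> A}"
  proof
    fix v assume v: "v \<in> Vset n"
    let ?A = "{i \<in> {1..n}. v i = 1}"
    have "v = vec ?A"
    proof
      fix i show "v i = vec ?A i" using v by (auto simp: Vset_def vec_def)
    qed
    moreover have "?A \<in> {A. A \<subseteq> {1..n} \<and> 1 \<in> A}" using v npos by (auto simp: Vset_def)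
    ultimately show "v \<in> vec ` {A. A \<subseteq> {1..n} \<and> 1 \<in> A}" by blast
  qed
qed

lemma card_Vfam: "card {A. A \<subseteq> {1..n} \<and> 1 \<in> A} = 2 ^ (n - 1)"
proof -
  have "bij_betw (insert 1) (Pow {2..n}) {A. A \<subseteq> {1..n} \<and> 1 \<in> A}"
  proof (rule bij_betw_imageI)
    show "inj_on (insert 1) (Pow {2..n})"
      by (rule inj_onI) (metis Pow_iff atLeastAtMost_iff insert_ident not_one_le_zero numeral_le_one_iff semiring_norm(69) subset_iff)
    show "insert 1 ` Pow {2..n} = {A. A \<subseteq> {1..n} \<and> 1 \<in> A}"
    proof
      show "insert 1 ` Pow {2..n} \<subseteq> {A. A \<subseteq> {1..n} \<and> 1 \<in> A}" using npos by auto
      show "{A. A \<subseteq> {1..n} \<and> 1 \<in> A} \<subseteq> insert 1 ` Pow {2..n}"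
      proof
        fix A assume A: "A \<in> {A. A \<subseteq> {1..n} \<and> 1 \<in> A}"
        then have "A = insert 1 (A - {1})" "A - {1} \<in> Pow {2..n}" by auto
        then show "A \<in> insert 1 ` Pow {2..n}" by blast
      qed
    qed
  qed
  then have "card {A. A \<subseteq> {1..n} \<and> 1 \<in> A} = card (Pow {2..n})" by (simp add: bij_betw_same_card)
  also have "\<dots> = 2 ^ (n - 1)" by (simp add: card_Pow)
  finally show ?thesis .
qed

lemma card_Vset: "card (Vset n) = 2 ^ (n - 1)"
proof -
  have "inj_on vec {A. A \<subseteq> {1..n} \<and> 1 \<in> A}" by (rule inj_on_subset[OF vec_inj]) auto
  then have "card (Vset n) = card {A. A \<subseteq> {1..n} \<and> 1 \<in> A}" unfolding Vset_eq by (rule card_image)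
  then show ?thesis using card_Vfam by simp
qed

lemma fin_sub: "finite {A. A \<subseteq> {1..n} \<and> P A}"
  by (rule finite_subset[of _ "Pow {1..n}"]) auto

lemma sum_G:
  assumes i: "i \<in> {1..n}"
  shows "(\<Sum>A\<in>{A. A \<subseteq> {1..n} \<and> n < 2*card A}. vec A i) = real ((n-1) choose (n div 2))"
proof -
  define G where "G = {A. A \<subseteq> {1..n} \<and> n < 2*card A}"
  define Gp where "Gp = {A. A \<subseteq> {1..n} \<and> n < 2*card A \<and> i \<in> A}"
  define Gm where "Gm = {A. A \<subseteq> {1..n} \<and> n < 2*card A \<and> i \<notin> A}"
  define E where "E = {A. A \<subseteq> {1..n} \<and> i \<in> A \<and> 2*card A = n+2}"
  have fG: "finite Gp" "finite Gm" "finite E"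
    unfolding Gp_def Gm_def E_def using fin_sub by auto
  have "G = Gp \<union> Gm" "Gp \<inter> Gm = {}" unfolding G_def Gp_def Gm_def by auto
  then have "(\<Sum>A\<in>G. vec A i) = (\<Sum>A\<in>Gp. vec A i) + (\<Sum>A\<in>Gm. vec A i)"
    using fG by (simp add: sum.union_disjoint)
  also have "(\<Sum>A\<in>Gp. vec A i) = (\<Sum>A\<in>Gp. 1)"
    using i by (intro sum.cong) (auto simp: Gp_def vec_def)
  also have "(\<Sum>A\<in>Gm. vec A i) = (\<Sum>A\<in>Gm. -1)"
    using i by (intro sum.cong) (auto simp: Gm_def vec_def)
  finally have s1: "(\<Sum>A\<in>G. vec A i) = real (card Gp) - real (card Gm)" by simp
  have fin1: "finite (A::nat set)" if "A \<subseteq> {1..n}" for A using that finite_subset by blast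
  have inj: "inj_on (insert i) Gm" unfolding Gm_def by (rule inj_onI) (metis insert_ident mem_Collect_eq)
  have Gp_eq: "Gp = insert i ` Gm \<union> E"
  proof
    show "insert i ` Gm \<union> E \<subseteq> Gp"
    proof
      fix A assume "A \<in> insert i ` Gm \<union> E"
      then show "A \<in> Gp"
      proof
        assume "A \<in> insert i ` Gm"
        then obtain B where B: "B \<in> Gm" "A = insert i B" by blast
        then have "finite B" using fin1 unfolding Gm_def by auto
        then show ?thesis using B i unfolding Gm_def Gp_def by auto
      next
        assume "A \<in> E" then show ?thesis unfolding E_def Gp_def by auto
      qed
    qed
  next
    show "Gp \<subseteq> insert i ` Gm \<union> E"
    proof
      fix A assume A: "A \<in> Gp"
      show "A \<in> insert i ` Gm \<union> E"
      proof (cases "2 * card A = n + 2")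
        case True then show ?thesis using A unfolding Gp_def E_def by auto
      next
        case False
        have fA: "finite A" using A fin1 unfolding Gp_def by auto
        have "card (A - {i}) = card A - 1" using A fA unfolding Gp_def by auto
        moreover have "n + 2 < 2 * card A" using A False ev unfolding Gp_def by (auto elim!: evenE)
        ultimately have "n < 2 * card (A - {i})" by auto
        then have "A - {i} \<in> Gm" using A unfolding Gp_def Gm_def by auto
        moreover have "A = insert i (A - {i})" using A unfolding Gp_def by auto
        ultimately show ?thesis by blast
      qed
    qed
  qed
  have disj: "insert i ` Gm \<inter> E = {}"
  proof -
    { fix B assume B: "B \<in> Gm" "insert i B \<in> E"
      then have "finite B" using fin1 unfolding Gm_def by auto
      then have "card (insert i B) = card B + 1" using B unfolding Gm_def by auto
      then have False using B unfolding Gm_def E_def by auto }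
    then show ?thesis by blast
  qed
  have "card Gp = card Gm + card E"
    using Gp_eq disj fG inj by (simp add: card_Un_disjoint card_image)
  moreover have "card E = (n-1) choose (n div 2)"
  proof -
    have "bij_betw (insert i) {B. B \<subseteq> {1..n} - {i} \<and> card B = n div 2} E"
    proof (rule bij_betw_imageI)
      show "inj_on (insert i) {B. B \<subseteq> {1..n} - {i} \<and> card B = n div 2}"
        by (rule inj_onI) (metis Diff_iff insert_ident mem_Collect_eq singletonI subsetD)
      show "insert i ` {B. B \<subseteq> {1..n} - {i} \<and> card B = n div 2} = E"
      proof
        show "insert i ` {B. B \<subseteq> {1..n} - {i} \<and> card B = n div 2} \<subseteq> E"
        proof
          fix A assume "A \<in> insert i ` {B. B \<subseteq> {1..n} - {i} \<and> card B = n div 2}"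
          then obtain B where B: "B \<subseteq> {1..n} - {i}" "card B = n div 2" "A = insert i B" by blast
          then have "finite B" using fin1 by auto
          moreover have "i \<notin> B" using B by auto
          ultimately have "card A = n div 2 + 1" using B by auto
          then show "A \<in> E" using B i ev unfolding E_def by auto
        qed
        show "E \<subseteq> insert i ` {B. B \<subseteq> {1..n} - {i} \<and> card B = n div 2}"
        proof
          fix A assume A: "A \<in> E"
          then have "finite A" using fin1 unfolding E_def by auto
          then have "card (A - {i}) = n div 2" using A unfolding E_def by auto
          moreover have "A = insert i (A - {i})" using A unfolding E_def by auto
          moreover have "A - {i} \<subseteq> {1..n} - {i}" using A unfolding E_def by auto
          ultimately show "A \<in> insert i ` {B. B \<subseteq> {1..n} - {i} \<and> card B = n div 2}" by blast
        qed
      qed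
    qed
    then have "card E = card {B. B \<subseteq> {1..n} - {i} \<and> card B = n div 2}"
      by (simp add: bij_betw_same_card)
    also have "\<dots> = card ({1..n} - {i}) choose (n div 2)" by (rule n_subsets) auto
    also have "card ({1..n} - {i}) = n - 1" using i by auto
    finally show ?thesis .
  qed
  ultimately show ?thesis using s1 unfolding G_def by simp
qed

definition blk :: "nat \<Rightarrow> nat set" where "blk j = {x \<in> {1..n}. x mod m = j}"
definition Qp :: "nat set \<Rightarrow> nat \<Rightarrow> int" where
  "Qp A j = int (card (A \<inter> blk j)) - int (card (blk j - A))"
definition rot :: "(nat \<Rightarrow> int) \<Rightarrow> nat \<Rightarrow> nat \<Rightarrow> int" where
  "rot q s = (\<lambda>j. q ((j + s) mod m))"
definition Phi :: "(nat \<Rightarrow> int) \<Rightarrow> int" where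
  "Phi q = sgn (q (LEAST j. j < m \<and> q j \<noteq> 0))"
definition psi :: "(nat \<Rightarrow> int) \<Rightarrow> int" where
  "psi q = (\<Sum>s<m. Phi (rot q s))"
definition Fv :: "nat set \<Rightarrow> real" where
  "Fv A = (if \<forall>j<m. Qp A j = 0 then (\<Prod>x\<in>{1..m}. vec A x) else if psi (Qp A) > 0 then 1 else -1)"
definition Mid :: "nat set set" where "Mid = {A. A \<subseteq> {1..n} \<and> 2 * card A = n}"

lemma Qp_compl: "Qp ({1..n} - A) j = - Qp A j"
proof -
  have "({1..n} - A) \<inter> blk j = blk j - A" "blk j - ({1..n} - A) = A \<inter> blk j"
    unfolding blk_def by auto
  then show ?thesis unfolding Qp_def by simp
qed

lemma Phi_neg: "Phi (\<lambda>j. - q j) = - Phi q"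
  unfolding Phi_def by (simp add: sgn_minus)

lemma psi_neg: "psi (\<lambda>j. - q j) = - psi q"
proof -
  have "rot (\<lambda>j. - q j) s = (\<lambda>j. - rot q s j)" for s unfolding rot_def by simp
  then show ?thesis unfolding psi_def by (simp add: Phi_neg sum_negf)
qed

lemma Phi_pm: assumes "\<exists>j<m. q j \<noteq> 0" shows "Phi q = 1 \<or> Phi q = -1"
proof -
  have "q (LEAST j. j < m \<and> q j \<noteq> 0) \<noteq> 0" using LeastI_ex[OF assms] by blast
  then show ?thesis unfolding Phi_def by (auto simp: sgn_if)
qed

lemma rot_nz: assumes "\<exists>j<m. q j \<noteq> 0" shows "\<exists>j<m. rot q s j \<noteq> 0"
proof -
  obtain j where j: "j < m" "q j \<noteq> 0" using assms by blast
  have mpos: "0 < m" using m3 by simp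
  define k where "k = (j + (m - s mod m)) mod m"
  have "(k + s) mod m = (j + (m - s mod m) + s) mod m" unfolding k_def by (simp add: mod_add_left_eq)
  also have "\<dots> = (j + (m - s mod m) + s mod m) mod m" by (simp add: mod_add_right_eq)
  also have "\<dots> = (j + m) mod m" using mpos mod_less_divisor[OF mpos, of s] by (simp add: less_imp_le)
  also have "\<dots> = j" using j by simp
  finally have "rot q s k = q j" unfolding rot_def by simp
  moreover have "k < m" unfolding k_def using mpos by simp
  ultimately show ?thesis using j by auto
qed

lemma odd_sum_pm: "(\<forall>s<(k::nat). x s = 1 \<or> x s = (-1::int)) \<Longrightarrow> odd (\<Sum>s<k. x s) \<longleftrightarrow> odd k"
proof (induction k)
  case 0 then show ?case by simp
next
  case (Suc k)
  then have "odd (\<Sum>s<k. x s) \<longleftrightarrow> odd k" by simp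
  moreover have "x k = 1 \<or> x k = -1" using Suc.prems by simp
  ultimately show ?case by auto
qed

lemma psi_nz: assumes "\<exists>j<m. q j \<noteq> 0" shows "psi q \<noteq> 0"
proof -
  have "\<forall>s<m. Phi (rot q s) = 1 \<or> Phi (rot q s) = -1"
    using Phi_pm rot_nz[OF assms] by blast
  then have "odd (psi q)" unfolding psi_def using odd_sum_pm[of m "\<lambda>s. Phi (rot q s)"] modd by simp
  then show ?thesis by auto
qed

lemma vec_prod_pm: "(\<Prod>x\<in>{1..m}. vec A x) = 1 \<or> (\<Prod>x\<in>{1..m}. vec A x) = -1"
proof -
  have "\<bar>\<Prod>x\<in>{1..m}. vec A x\<bar> = (\<Prod>x\<in>{1..m}. \<bar>vec A x\<bar>)" by (rule abs_prod)
  also have "\<dots> = (\<Prod>x\<in>{1..m}. 1)" using mle by (intro prod.cong) (auto simp: vec_def)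
  finally show ?thesis by auto
qed

lemma Fv_pm: "Fv A = 1 \<or> Fv A = -1"
  unfolding Fv_def using vec_prod_pm by auto

lemma Fv_compl: "Fv ({1..n} - A) = - Fv A"
proof (cases "\<forall>j<m. Qp A j = 0")
  case True
  then have "\<forall>j<m. Qp ({1..n} - A) j = 0" using Qp_compl by (metis neg_equal_0_iff_equal)
  moreover have "(\<Prod>x\<in>{1..m}. vec ({1..n} - A) x) = (\<Prod>x\<in>{1..m}. - vec A x)"
    using mle by (intro prod.cong) (auto simp: vec_def)
  moreover have "(\<Prod>x\<in>{1..m}. - vec A x) = (-1) ^ m * (\<Prod>x\<in>{1..m}. vec A x)"
    by (simp add: prod_uminus)
  ultimately show ?thesis using True modd unfolding Fv_def by simp
next
  case False
  then have ex: "\<exists>j<m. Qp A j \<noteq> 0" by auto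
  have "Qp ({1..n} - A) = (\<lambda>j. - Qp A j)" by (rule ext) (rule Qp_compl)
  then have "psi (Qp ({1..n} - A)) = - psi (Qp A)" by (simp add: psi_neg)
  moreover have "psi (Qp A) \<noteq> 0" using psi_nz[OF ex] .
  moreover have "\<not> (\<forall>j<m. Qp ({1..n} - A) j = 0)" using ex Qp_compl by (metis neg_equal_0_iff_equal)
  ultimately show ?thesis using False unfolding Fv_def by auto
qed

lemma blk_sub: "blk j \<subseteq> {1..n}" unfolding blk_def by auto

lemma fin_blk: "finite (blk j)" using blk_sub finite_subset by blast

lemma sum_M0:
  assumes i: "i \<in> {1..n}"
  shows "(\<Sum>A\<in>{A \<in> Mid. \<forall>j<m. Qp A j = 0}. Fv A * vec A i) = 0"
proof -
  define M0 where "M0 = {A \<in> Mid. \<forall>j<m. Qp A j = 0}"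
  define j0 where "j0 = (i mod m + 1) mod m"
  define X where "X = blk j0"
  define x0 where "x0 = (if j0 = 0 then m else j0)"
  define phi where "phi A = (A - X) \<union> (X - A)" for A :: "nat set"
  have mpos: "0 < m" using m3 by simp
  have j0m: "j0 < m" unfolding j0_def using mpos by simp
  have iX: "i \<notin> X"
  proof
    assume "i \<in> X"
    then have "i mod m = j0" unfolding X_def blk_def by auto
    moreover have "i mod m < m" using mpos by simp
    show False
    proof (cases "i mod m + 1 < m")
      case True then show ?thesis using \<open>i mod m = j0\<close> unfolding j0_def by simp
    next
      case False
      then have "i mod m + 1 = m" using \<open>i mod m < m\<close> by simp
      then have "j0 = 0" unfolding j0_def by simp
      then show ?thesis using \<open>i mod m = j0\<close> \<open>i mod m + 1 = m\<close> m3 by simp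
    qed
  qed
  have x0X: "x0 \<in> X" "x0 \<in> {1..m}" unfolding x0_def X_def blk_def using mle j0m mpos by auto
  have x0u: "x = x0" if "x \<in> {1..m}" "x \<in> X" for x
  proof -
    have "x mod m = j0" using that unfolding X_def blk_def by auto
    then show ?thesis using that unfolding x0_def
      by (cases "x = m") auto
  qed
  have XU: "X \<subseteq> {1..n}" unfolding X_def by (rule blk_sub)
  have finX: "finite X" unfolding X_def by (rule fin_blk)
  have Qphi: "Qp (phi A) j = (if j = j0 then - Qp A j else Qp A j)" if "j < m" for A j
  proof (cases "j = j0")
    case True
    have "phi A \<inter> blk j = X - A" "blk j - phi A = A \<inter> X" unfolding phi_def X_def True by auto
    then show ?thesis unfolding Qp_def X_def True by (simp add: Int_commute)
  next
    case False
    have "blk j \<inter> X = {}" unfolding X_def blk_def using False by auto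
    then have "phi A \<inter> blk j = A \<inter> blk j" "blk j - phi A = blk j - A" unfolding phi_def by auto
    then show ?thesis unfolding Qp_def using False by simp
  qed
  have phiM0: "phi A \<in> M0" if A: "A \<in> M0" for A
  proof -
    have AU: "A \<subseteq> {1..n}" using A unfolding M0_def Mid_def by auto
    then have fA: "finite A" using finite_subset by blast
    have q0: "Qp A j0 = 0" using A j0m unfolding M0_def by auto
    then have c: "card (A \<inter> X) = card (X - A)" unfolding Qp_def X_def by simp
    have "card (phi A) = card (A - X) + card (X - A)"
      unfolding phi_def using fA finX by (intro card_Un_disjoint) auto
    also have "\<dots> = card (A - X) + card (A \<inter> X)" using c by simp
    also have "\<dots> = card A" using fA by (metis Int_commute add.commute card_Int_Diff)
    finally have "card (phi A) = card A" .
    moreover have "phi A \<subseteq> {1..n}" using AU XU unfolding phi_def by auto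
    moreover have "\<forall>j<m. Qp (phi A) j = 0" using A Qphi unfolding M0_def by auto
    ultimately show ?thesis using A unfolding M0_def Mid_def by auto
  qed
  have phiphi: "phi (phi A) = A" for A unfolding phi_def by auto
  have Fphi: "Fv (phi A) * vec (phi A) i = - (Fv A * vec A i)" if A: "A \<in> M0" for A
  proof -
    have z1: "\<forall>j<m. Qp A j = 0" using A unfolding M0_def by auto
    have z2: "\<forall>j<m. Qp (phi A) j = 0" using phiM0[OF A] unfolding M0_def by auto
    have vi: "vec (phi A) i = vec A i" using iX unfolding vec_def phi_def by auto
    have "(\<Prod>x\<in>{1..m}. vec (phi A) x) = vec (phi A) x0 * (\<Prod>x\<in>{1..m} - {x0}. vec (phi A) x)"
      using x0X by (simp add: prod.remove)
    also have "(\<Prod>x\<in>{1..m} - {x0}. vec (phi A) x) = (\<Prod>x\<in>{1..m} - {x0}. vec A x)"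
    proof (rule prod.cong)
      fix x assume "x \<in> {1..m} - {x0}"
      then have "x \<notin> X" using x0u by auto
      then show "vec (phi A) x = vec A x" unfolding vec_def phi_def by auto
    qed simp
    also have "vec (phi A) x0 = - vec A x0" using x0X XU unfolding vec_def phi_def by auto
    finally have "(\<Prod>x\<in>{1..m}. vec (phi A) x) = - (vec A x0 * (\<Prod>x\<in>{1..m} - {x0}. vec A x))" by simp
    also have "vec A x0 * (\<Prod>x\<in>{1..m} - {x0}. vec A x) = (\<Prod>x\<in>{1..m}. vec A x)"
      using x0X by (simp add: prod.remove)
    finally show ?thesis using z1 z2 vi unfolding Fv_def by simp
  qed
  have "(\<Sum>A\<in>M0. - (Fv A * vec A i)) = (\<Sum>A\<in>M0. Fv A * vec A i)"
    by (rule sum.reindex_bij_witness[of _ phi phi]) (auto simp: phiphi phiM0 Fphi)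
  then have "(\<Sum>A\<in>M0. Fv A * vec A i) = 0" by (simp add: sum_negf)
  then show ?thesis unfolding M0_def .
qed


definition tau :: "nat \<Rightarrow> nat" where "tau x = x mod n + 1"
definition shift :: "nat set \<Rightarrow> nat set" where "shift A = {x \<in> {1..n}. tau x \<in> A}"

lemma tau_U: "tau x \<in> {1..n}"
  unfolding tau_def using npos by (simp add: Suc_leI)

lemma tau_lt: "x \<in> {1..n} \<Longrightarrow> x < n \<Longrightarrow> tau x = x + 1"
  unfolding tau_def by simp

lemma tau_inj: "inj_on tau {1..n}"
proof (rule inj_onI)
  fix x y assume x: "x \<in> {1..n}" and y: "y \<in> {1..n}" and e: "tau x = tau y"
  have "x mod n = y mod n" using e unfolding tau_def by simp
  then show "x = y" using x y
    by (cases "x = n"; cases "y = n") auto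
qed

lemma tau_surj: "tau ` {1..n} = {1..n}"
proof
  show "tau ` {1..n} \<subseteq> {1..n}" using tau_U by auto
  show "{1..n} \<subseteq> tau ` {1..n}"
  proof
    fix y assume y: "y \<in> {1..n}"
    show "y \<in> tau ` {1..n}"
    proof (cases "y = 1")
      case True
      have "tau n = 1" unfolding tau_def by simp
      moreover have "n \<in> {1..n}" using npos by simp
      ultimately show ?thesis using True by (metis imageI)
    next
      case False
      then have "tau (y - 1) = y" "y - 1 \<in> {1..n}" using y unfolding tau_def by auto
      then show ?thesis by force
    qed
  qed
qed

lemma tau_mod: "tau x mod m = (x mod m + 1) mod m"
proof -
  have "tau x mod m = (x mod n mod m + 1) mod m" unfolding tau_def by (simp add: mod_Suc_eq)
  also have "x mod n mod m = x mod m" using mdvd by (simp add: mod_mod_cancel)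
  finally show ?thesis .
qed

lemma suc_mod_inj: "a < m \<Longrightarrow> b < m \<Longrightarrow> (a + 1) mod m = (b + 1) mod m \<Longrightarrow> a = b"
proof -
  assume a: "a < m" and b: "b < m" and e: "(a + 1) mod m = (b + 1) mod m"
  have m1: "1 < m" using m3 by simp
  show "a = b"
  proof (cases "a + 1 < m"; cases "b + 1 < m")
    assume "a + 1 < m" "b + 1 < m" then show ?thesis using e by simp
  next
    assume "a + 1 < m" "\<not> b + 1 < m"
    then have "b + 1 = m" using b by simp
    then show ?thesis using e \<open>a + 1 < m\<close> by simp
  next
    assume "\<not> a + 1 < m" "b + 1 < m"
    then have "a + 1 = m" using a by simp
    then show ?thesis using e \<open>b + 1 < m\<close> by simp
  next
    assume "\<not> a + 1 < m" "\<not> b + 1 < m"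
    then show ?thesis using a b by simp
  qed
qed



end

context cfg begin
lemma tau_img:
  assumes j: "j < m"
  shows "tau ` {x \<in> {1..n}. x mod m = j \<and> P (tau x)} = {y \<in> {1..n}. y mod m = (j + 1) mod m \<and> P y}"
proof
  show "tau ` {x \<in> {1..n}. x mod m = j \<and> P (tau x)} \<subseteq> {y \<in> {1..n}. y mod m = (j + 1) mod m \<and> P y}"
  proof
    fix y assume "y \<in> tau ` {x \<in> {1..n}. x mod m = j \<and> P (tau x)}"
    then obtain x where x: "x \<in> {1..n}" "x mod m = j" "P (tau x)" "y = tau x" by blast
    have "y mod m = (j + 1) mod m" unfolding x(4) tau_mod[of x] x(2) ..
    moreover have "y \<in> {1..n}" unfolding x(4) by (rule tau_U)
    ultimately show "y \<in> {y \<in> {1..n}. y mod m = (j + 1) mod m \<and> P y}" using x(3) x(4) by blast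
  qed
  show "{y \<in> {1..n}. y mod m = (j + 1) mod m \<and> P y} \<subseteq> tau ` {x \<in> {1..n}. x mod m = j \<and> P (tau x)}"
  proof
    fix y assume y: "y \<in> {y \<in> {1..n}. y mod m = (j + 1) mod m \<and> P y}"
    then have "y \<in> tau ` {1..n}" using tau_surj by simp
    then obtain x where x: "x \<in> {1..n}" "y = tau x" by blast
    have "y mod m = (j + 1) mod m" using y by blast
    then have eq: "(x mod m + 1) mod m = (j + 1) mod m" unfolding x(2) tau_mod[of x] .
    have xl: "x mod m < m" using m3 by simp
    have "x mod m = j" by (rule suc_mod_inj[OF xl j eq])
    moreover have "P (tau x)" using y unfolding x(2) by blast
    ultimately have "x \<in> {x \<in> {1..n}. x mod m = j \<and> P (tau x)}" using x(1) by blast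
    then show "y \<in> tau ` {x \<in> {1..n}. x mod m = j \<and> P (tau x)}" unfolding x(2) by (rule imageI)
  qed
qed

lemma card_tau_img: "B \<subseteq> {1..n} \<Longrightarrow> card (tau ` B) = card B"
  using tau_inj by (meson card_image inj_on_subset)

lemma Qp_shift: assumes j: "j < m" shows "Qp (shift A) j = Qp A ((j + 1) mod m)"
proof -
  have e1: "shift A \<inter> blk j = {x \<in> {1..n}. x mod m = j \<and> tau x \<in> A}"
    unfolding shift_def blk_def by auto
  have e2: "blk j - shift A = {x \<in> {1..n}. x mod m = j \<and> tau x \<notin> A}"
    unfolding shift_def blk_def by auto
  have "card (shift A \<inter> blk j) = card (tau ` (shift A \<inter> blk j))"
    by (rule card_tau_img[symmetric]) (auto simp: shift_def)
  also have "tau ` (shift A \<inter> blk j) = A \<inter> blk ((j + 1) mod m)"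
    unfolding e1 tau_img[OF j, of "\<lambda>y. y \<in> A"] unfolding blk_def by auto
  finally have c1: "card (shift A \<inter> blk j) = card (A \<inter> blk ((j + 1) mod m))" .
  have "card (blk j - shift A) = card (tau ` (blk j - shift A))"
    by (rule card_tau_img[symmetric]) (auto simp: blk_def)
  also have "tau ` (blk j - shift A) = blk ((j + 1) mod m) - A"
    unfolding e2 tau_img[OF j, of "\<lambda>y. y \<notin> A"] unfolding blk_def by auto
  finally have c2: "card (blk j - shift A) = card (blk ((j + 1) mod m) - A)" .
  show ?thesis unfolding Qp_def c1 c2 ..
qed


lemma vec_shift: "i \<in> {1..n} \<Longrightarrow> vec A (tau i) = vec (shift A) i"
  unfolding vec_def shift_def using tau_U by auto

lemma tau_shift: assumes A: "A \<subseteq> {1..n}" shows "tau ` shift A = A"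
proof
  show "tau ` shift A \<subseteq> A" unfolding shift_def by blast
  show "A \<subseteq> tau ` shift A"
  proof
    fix y assume y: "y \<in> A"
    then have "y \<in> tau ` {1..n}" using A tau_surj by blast
    then obtain x where x: "x \<in> {1..n}" "y = tau x" by blast
    then have "x \<in> shift A" unfolding shift_def using y by blast
    then show "y \<in> tau ` shift A" using x(2) by blast
  qed
qed

lemma shift_tau: assumes B: "B \<subseteq> {1..n}" shows "shift (tau ` B) = B"
proof -
  have "x \<in> {1..n} \<Longrightarrow> tau x \<in> tau ` B \<longleftrightarrow> x \<in> B" for x
    using inj_on_image_mem_iff[OF tau_inj _ B] by blast
  then show ?thesis unfolding shift_def using B by blast
qed

lemma psi_rot:
  assumes h: "\<forall>j<m. q' j = q ((j + 1) mod m)"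
  shows "psi q' = psi q"
proof -
  have mpos: "0 < m" using m3 by simp
  have r1: "rot q' s = rot q (Suc s)" for s
  proof
    fix j
    have "q' ((j + s) mod m) = q (((j + s) mod m + 1) mod m)" using h mpos by simp
    also have "((j + s) mod m + 1) mod m = (j + Suc s) mod m" by (simp add: mod_Suc_eq)
    finally show "rot q' s j = rot q (Suc s) j" unfolding rot_def .
  qed
  have r2: "rot q m = rot q 0" unfolding rot_def by simp
  have "psi q' = (\<Sum>s<m. Phi (rot q (Suc s)))" unfolding psi_def r1 ..
  also have "\<dots> = (\<Sum>s<Suc m. Phi (rot q s)) - Phi (rot q 0)"
    using sum.lessThan_Suc_shift[of "\<lambda>s. Phi (rot q s)" m] by linarith
  also have "\<dots> = psi q" unfolding psi_def using r2 by simp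
  finally show ?thesis .
qed

lemma Fv_shift:
  assumes A: "A \<subseteq> {1..n}" and nz: "\<not> (\<forall>j<m. Qp A j = 0)"
  shows "Fv (shift A) = Fv A" "\<not> (\<forall>j<m. Qp (shift A) j = 0)"
proof -
  have mpos: "0 < m" using m3 by simp
  show nz2: "\<not> (\<forall>j<m. Qp (shift A) j = 0)"
  proof
    assume z: "\<forall>j<m. Qp (shift A) j = 0"
    have "\<forall>j<m. Qp A j = 0"
    proof (intro allI impI)
      fix j assume j: "j < m"
      define k where "k = (j + m - 1) mod m"
      have k: "k < m" unfolding k_def using mpos by simp
      have "(k + 1) mod m = (j + m - 1 + 1) mod m" unfolding k_def by (simp add: mod_Suc_eq)
      also have "\<dots> = j" using j mpos by simp
      finally have "Qp (shift A) k = Qp A j" using Qp_shift[OF k] by simp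
      then show "Qp A j = 0" using z k by simp
    qed
    then show False using nz by simp
  qed
  have "psi (Qp (shift A)) = psi (Qp A)" by (rule psi_rot) (simp add: Qp_shift)
  moreover have f1: "(\<forall>j<m. Qp (shift A) j = 0) = False" using nz2 by blast
  moreover have f2: "(\<forall>j<m. Qp A j = 0) = False" using nz by blast
  ultimately show "Fv (shift A) = Fv A" unfolding Fv_def by (simp only: if_False)
qed

lemma sum_vec_Mid: "A \<in> Mid \<Longrightarrow> (\<Sum>i\<in>{1..n}. vec A i) = 0"
proof -
  assume A: "A \<in> Mid"
  then have AU: "A \<subseteq> {1..n}" and cA: "2 * card A = n" unfolding Mid_def by auto
  have "(\<Sum>i\<in>{1..n}. vec A i) = (\<Sum>i\<in>{1..n}. if i \<in> A then 1 else -1)"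
    by (rule sum.cong) (auto simp: vec_def)
  also have "\<dots> = real (card ({1..n} \<inter> {x. x \<in> A})) - real (card ({1..n} \<inter> - {x. x \<in> A}))"
    by (simp add: sum.If_cases)
  also have "{1..n} \<inter> {x. x \<in> A} = A" using AU by auto
  also have "{1..n} \<inter> - {x. x \<in> A} = {1..n} - A" by auto
  also have "card ({1..n} - A) = n - card A" using AU by (simp add: card_Diff_subset finite_subset)
  finally show ?thesis using cA by simp
qed

lemma sum_M1:
  assumes i: "i \<in> {1..n}"
  shows "(\<Sum>A\<in>{A \<in> Mid. \<not> (\<forall>j<m. Qp A j = 0)}. Fv A * vec A i) = 0"
proof -
  define M1 where "M1 = {A \<in> Mid. \<not> (\<forall>j<m. Qp A j = 0)}"
  define S where "S k = (\<Sum>A\<in>M1. Fv A * vec A k)" for k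
  have M1U: "A \<subseteq> {1..n}" if "A \<in> M1" for A using that unfolding M1_def Mid_def by auto
  have shU: "shift A \<subseteq> {1..n}" for A unfolding shift_def by auto
  have shM1: "shift A \<in> M1" if A: "A \<in> M1" for A
  proof -
    have "card A = card (tau ` shift A)" using tau_shift[OF M1U[OF A]] by simp
    also have "\<dots> = card (shift A)" by (rule card_tau_img[OF shU])
    finally have "card (shift A) = card A" by simp
    moreover have "\<not> (\<forall>j<m. Qp (shift A) j = 0)"
      using Fv_shift(2)[OF M1U[OF A]] A unfolding M1_def by auto
    ultimately show ?thesis using A shU unfolding M1_def Mid_def by auto
  qed
  have tauM1: "tau ` B \<in> M1" if B: "B \<in> M1" for B
  proof -
    have BU: "B \<subseteq> {1..n}" by (rule M1U[OF B])
    have tU: "tau ` B \<subseteq> {1..n}" using tau_U by auto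
    have "card (tau ` B) = card B" by (rule card_tau_img[OF BU])
    moreover have "\<not> (\<forall>j<m. Qp (tau ` B) j = 0)"
    proof
      assume z: "\<forall>j<m. Qp (tau ` B) j = 0"
      have "\<forall>j<m. Qp B j = 0"
      proof (intro allI impI)
        fix j assume j: "j < m"
        have "Qp B j = Qp (shift (tau ` B)) j" using shift_tau[OF BU] by simp
        also have "\<dots> = Qp (tau ` B) ((j + 1) mod m)" by (rule Qp_shift[OF j])
        also have "\<dots> = 0" using z m3 by simp
        finally show "Qp B j = 0" .
      qed
      then show False using B unfolding M1_def by auto
    qed
    ultimately show ?thesis using B tU unfolding M1_def Mid_def by auto
  qed
  have step: "S (tau k) = S k" if k: "k \<in> {1..n}" for k
  proof -
    have "S (tau k) = (\<Sum>B\<in>M1. Fv B * vec B k)" unfolding S_def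
    proof (rule sum.reindex_bij_witness[of M1 "\<lambda>B. tau ` B" shift])
      fix a assume a: "a \<in> M1"
      show "tau ` shift a = a" by (rule tau_shift[OF M1U[OF a]])
      show "shift a \<in> M1" by (rule shM1[OF a])
      have nz: "\<not> (\<forall>j<m. Qp a j = 0)" using a unfolding M1_def by auto
      show "Fv (shift a) * vec (shift a) k = Fv a * vec a (tau k)"
        using Fv_shift(1)[OF M1U[OF a] nz] vec_shift[OF k] by simp
    next
      fix b assume b: "b \<in> M1"
      show "shift (tau ` b) = b" by (rule shift_tau[OF M1U[OF b]])
      show "tau ` b \<in> M1" by (rule tauM1[OF b])
    qed
    then show ?thesis unfolding S_def .
  qed
  have const: "1 \<le> k \<longrightarrow> k \<le> n \<longrightarrow> S k = S 1" for k
  proof (induction k)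
    case 0 then show ?case by simp
  next
    case (Suc k)
    show ?case
    proof (cases "k = 0")
      case True then show ?thesis by simp
    next
      case False
      show ?thesis
      proof (intro impI)
        assume "Suc k \<le> n"
        then have kU: "k \<in> {1..n}" "k < n" using False by auto
        have "S (Suc k) = S (tau k)" using tau_lt[OF kU] by simp
        also have "\<dots> = S k" by (rule step[OF kU(1)])
        also have "\<dots> = S 1" using Suc.IH kU by auto
        finally show "S (Suc k) = S 1" .
      qed
    qed
  qed
  have finM1: "finite M1" unfolding M1_def Mid_def
    by (rule finite_subset[of _ "Pow {1..n}"]) auto
  have "(\<Sum>k\<in>{1..n}. S k) = (\<Sum>A\<in>M1. \<Sum>k\<in>{1..n}. Fv A * vec A k)"
    unfolding S_def by (rule sum.swap)
  also have "\<dots> = (\<Sum>A\<in>M1. Fv A * (\<Sum>k\<in>{1..n}. vec A k))"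
    by (simp add: sum_distrib_left)
  also have "\<dots> = 0" using sum_vec_Mid unfolding M1_def by simp
  finally have "(\<Sum>k\<in>{1..n}. S k) = 0" .
  moreover have "(\<Sum>k\<in>{1..n}. S k) = (\<Sum>k\<in>{1..n}. S 1)"
  proof (rule sum.cong)
    fix k assume "k \<in> {1..n}"
    then show "S k = S 1" using const[of k] by simp
  qed simp
  ultimately have "real n * S 1 = 0" by simp
  then have "S 1 = 0" using npos by simp
  moreover have "S i = S 1" using const[of i] i by simp
  ultimately have "S i = 0" by simp
  then show ?thesis unfolding S_def M1_def .
qed

lemma sum_Mid:
  assumes i: "i \<in> {1..n}"
  shows "(\<Sum>A\<in>Mid. Fv A * vec A i) = 0"
proof -
  define M0 where "M0 = {A \<in> Mid. \<forall>j<m. Qp A j = 0}"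
  define M1 where "M1 = {A \<in> Mid. \<not> (\<forall>j<m. Qp A j = 0)}"
  have fin: "finite Mid" unfolding Mid_def by (rule finite_subset[of _ "Pow {1..n}"]) auto
  have e: "Mid = M0 \<union> M1" unfolding M0_def M1_def by blast
  have f: "finite M0" "finite M1" using fin unfolding M0_def M1_def by auto
  have d: "M0 \<inter> M1 = {}" unfolding M0_def M1_def by blast
  have "(\<Sum>A\<in>Mid. Fv A * vec A i) = (\<Sum>A\<in>M0 \<union> M1. Fv A * vec A i)" using e by simp
  also have "\<dots> = (\<Sum>A\<in>M0. Fv A * vec A i) + (\<Sum>A\<in>M1. Fv A * vec A i)"
    by (rule sum.union_disjoint[OF f d])
  finally show ?thesis using sum_M0[OF i] sum_M1[OF i] unfolding M0_def M1_def by simp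
qed

definition Ff :: "nat set \<Rightarrow> real" where
  "Ff A = (if n < 2 * card A then 1 else if 2 * card A < n then -1 else Fv A)"

lemma Ff_pm: "Ff A = 1 \<or> Ff A = -1"
  unfolding Ff_def using Fv_pm by auto

lemma card_compl: "A \<subseteq> {1..n} \<Longrightarrow> card ({1..n} - A) = n - card A"
  by (simp add: card_Diff_subset finite_subset)

lemma Ff_compl: assumes A: "A \<subseteq> {1..n}" shows "Ff ({1..n} - A) = - Ff A"
proof -
  have c: "card ({1..n} - A) = n - card A" by (rule card_compl[OF A])
  have le: "card A \<le> n" using A by (metis card_atLeastAtMost card_mono diff_Suc_1 finite_atLeastAtMost)
  show ?thesis
  proof (cases "n < 2 * card A")
    case True then show ?thesis unfolding Ff_def c using le by auto
  next
    case False
    show ?thesis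
    proof (cases "2 * card A < n")
      case True then show ?thesis unfolding Ff_def c using le by auto
    next
      case False2: False
      then have "2 * card A = n" using False by simp
      then have "2 * (n - card A) = n" by simp
      then show ?thesis unfolding Ff_def c using Fv_compl False False2 by simp
    qed
  qed
qed

lemma sum_all:
  assumes i: "i \<in> {1..n}"
  shows "(\<Sum>A\<in>Pow {1..n}. Ff A * vec A i) = 2 * real ((n-1) choose (n div 2))"
proof -
  define G where "G = {A. A \<subseteq> {1..n} \<and> n < 2 * card A}"
  define L where "L = {A. A \<subseteq> {1..n} \<and> 2 * card A < n}"
  have e: "Pow {1..n} = (G \<union> L) \<union> Mid" unfolding G_def L_def Mid_def by auto
  have fin: "finite G" "finite L" "finite Mid" unfolding G_def L_def Mid_def
    by (rule finite_subset[of _ "Pow {1..n}"]; auto)+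
  have d1: "G \<inter> L = {}" "(G \<union> L) \<inter> Mid = {}" unfolding G_def L_def Mid_def by auto
  have "(\<Sum>A\<in>Pow {1..n}. Ff A * vec A i) = (\<Sum>A\<in>(G \<union> L) \<union> Mid. Ff A * vec A i)" using e by simp
  also have "\<dots> = (\<Sum>A\<in>G \<union> L. Ff A * vec A i) + (\<Sum>A\<in>Mid. Ff A * vec A i)"
    by (rule sum.union_disjoint) (use fin d1 in auto)
  also have "(\<Sum>A\<in>G \<union> L. Ff A * vec A i) = (\<Sum>A\<in>G. Ff A * vec A i) + (\<Sum>A\<in>L. Ff A * vec A i)"
    by (rule sum.union_disjoint) (use fin d1 in auto)
  also have "(\<Sum>A\<in>G. Ff A * vec A i) = (\<Sum>A\<in>G. vec A i)"
    by (rule sum.cong) (auto simp: G_def Ff_def)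
  also have "(\<Sum>A\<in>L. Ff A * vec A i) = (\<Sum>A\<in>L. - vec A i)"
    by (rule sum.cong) (auto simp: L_def Ff_def)
  also have "(\<Sum>A\<in>Mid. Ff A * vec A i) = (\<Sum>A\<in>Mid. Fv A * vec A i)"
    by (rule sum.cong) (auto simp: Mid_def Ff_def)
  also have "(\<Sum>A\<in>L. - vec A i) = (\<Sum>A\<in>G. vec A i)"
  proof (rule sum.reindex_bij_witness[of L "\<lambda>A. {1..n} - A" "\<lambda>A. {1..n} - A"])
    fix a assume a: "a \<in> L"
    show "{1..n} - ({1..n} - a) = a" using a unfolding L_def by auto
    have "card ({1..n} - a) = n - card a" using a card_compl unfolding L_def by auto
    then show "{1..n} - a \<in> G" using a unfolding L_def G_def by auto
    show "vec ({1..n} - a) i = - vec a i" by (rule vec_compl[OF i])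
  next
    fix b assume b: "b \<in> G"
    show "{1..n} - ({1..n} - b) = b" using b unfolding G_def by auto
    have le: "card b \<le> n" using b unfolding G_def
      by (metis card_atLeastAtMost card_mono diff_Suc_1 finite_atLeastAtMost mem_Collect_eq)
    have "card ({1..n} - b) = n - card b" using b card_compl unfolding G_def by auto
    then show "{1..n} - b \<in> L" using b le unfolding L_def G_def by auto
  qed
  finally show ?thesis using sum_G[OF i] sum_Mid[OF i] unfolding G_def by simp
qed

lemma sum_V:
  assumes i: "i \<in> {1..n}"
  shows "(\<Sum>A\<in>{A. A \<subseteq> {1..n} \<and> 1 \<in> A}. Ff A * vec A i) = real ((n-1) choose (n div 2))"
proof -
  define V1 where "V1 = {A. A \<subseteq> {1..n} \<and> 1 \<in> A}"
  define V0 where "V0 = {A. A \<subseteq> {1..n} \<and> 1 \<notin> A}"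
  have e: "Pow {1..n} = V1 \<union> V0" unfolding V1_def V0_def by auto
  have fin: "finite V1" "finite V0" unfolding V1_def V0_def
    by (rule finite_subset[of _ "Pow {1..n}"]; auto)+
  have d: "V1 \<inter> V0 = {}" unfolding V1_def V0_def by auto
  have one: "1 \<in> {1..n}" using npos by simp
  have "(\<Sum>A\<in>V0. Ff A * vec A i) = (\<Sum>A\<in>V1. Ff A * vec A i)"
  proof (rule sum.reindex_bij_witness[of V0 "\<lambda>A. {1..n} - A" "\<lambda>A. {1..n} - A"])
    fix a assume a: "a \<in> V0"
    show "{1..n} - ({1..n} - a) = a" using a unfolding V0_def by auto
    show "{1..n} - a \<in> V1" using a one unfolding V0_def V1_def by auto
    have "a \<subseteq> {1..n}" using a unfolding V0_def by auto
    then show "Ff ({1..n} - a) * vec ({1..n} - a) i = Ff a * vec a i"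
      using Ff_compl vec_compl[OF i] by simp
  next
    fix b assume b: "b \<in> V1"
    show "{1..n} - ({1..n} - b) = b" using b unfolding V1_def by auto
    show "{1..n} - b \<in> V0" using b unfolding V0_def V1_def by auto
  qed
  moreover have "(\<Sum>A\<in>Pow {1..n}. Ff A * vec A i) = (\<Sum>A\<in>V1. Ff A * vec A i) + (\<Sum>A\<in>V0. Ff A * vec A i)"
    unfolding e by (rule sum.union_disjoint[OF fin d])
  ultimately show ?thesis using sum_all[OF i] unfolding V1_def by simp
qed

definition Wfam :: "nat set set" where "Wfam = {A \<in> {A. A \<subseteq> {1..n} \<and> 1 \<in> A}. Ff A = 1}"

lemma W_sub: "vec ` Wfam \<subseteq> Vset n"
  unfolding Vset_eq Wfam_def by auto

lemma sum_W:
  assumes i: "i \<in> {1..n}"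
  shows "(\<Sum>v\<in>vec ` Wfam. v i) = gV n i + (1/2) * real ((n-1) choose (n div 2))"
proof -
  define V1 where "V1 = {A. A \<subseteq> {1..n} \<and> 1 \<in> A}"
  have fin: "finite V1" unfolding V1_def by (rule finite_subset[of _ "Pow {1..n}"]) auto
  have injV: "inj_on vec V1" by (rule inj_on_subset[OF vec_inj]) (auto simp: V1_def)
  have injW: "inj_on vec Wfam" by (rule inj_on_subset[OF injV]) (auto simp: V1_def Wfam_def)
  have "(\<Sum>v\<in>vec ` Wfam. v i) = (\<Sum>A\<in>Wfam. vec A i)"
    using sum.reindex[OF injW, of "\<lambda>v. v i"] by simp
  also have "\<dots> = (\<Sum>A\<in>V1. if Ff A = 1 then vec A i else 0)"
    unfolding Wfam_def V1_def[symmetric] by (rule sum.inter_filter[OF fin])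
  also have "\<dots> = (\<Sum>A\<in>V1. (1/2) * vec A i + (1/2) * (Ff A * vec A i))"
  proof (rule sum.cong)
    fix A assume "A \<in> V1"
    show "(if Ff A = 1 then vec A i else 0) = (1/2) * vec A i + (1/2) * (Ff A * vec A i)"
      using Ff_pm[of A] by auto
  qed simp
  also have "\<dots> = (1/2) * (\<Sum>A\<in>V1. vec A i) + (1/2) * (\<Sum>A\<in>V1. Ff A * vec A i)"
    by (simp add: sum.distrib sum_distrib_left)
  also have "(\<Sum>A\<in>V1. Ff A * vec A i) = real ((n-1) choose (n div 2))"
    unfolding V1_def by (rule sum_V[OF i])
  also have "(\<Sum>A\<in>V1. vec A i) = (\<Sum>v\<in>Vset n. v i)"
    unfolding Vset_eq V1_def[symmetric] using sum.reindex[OF injV, of "\<lambda>v. v i"] by simp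
  finally show ?thesis unfolding gV_def by simp
qed

end

lemma odd_divisor_exists:
  fixes n :: nat
  shows "0 < n \<Longrightarrow> \<not> (\<exists>k. n = 2 ^ k) \<Longrightarrow> \<exists>m. odd m \<and> 3 \<le> m \<and> m dvd n"
proof (induction n rule: less_induct)
  case (less n)
  show ?case
  proof (cases "even n")
    case True
    then obtain k where k: "n = 2 * k" by (auto elim: evenE)
    have "0 < k" "k < n" using less.prems k by auto
    moreover have "\<not> (\<exists>j. k = 2 ^ j)"
    proof
      assume "\<exists>j. k = 2 ^ j"
      then obtain j where "k = 2 ^ j" by blast
      then have "n = 2 ^ Suc j" using k by simp
      then show False using less.prems by blast
    qed
    ultimately obtain m where "odd m" "3 \<le> m" "m dvd k" using less.IH by blast
    then show ?thesis using k by auto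
  next
    case False
    have "n \<noteq> 1" using less.prems by (metis power_0)
    then have "3 \<le> n" using False less.prems
      by (metis One_nat_def Suc_1 Suc_leI dvd_refl le_antisym linorder_not_less nat_less_le numeral_3_eq_3 odd_pos)
    then show ?thesis using False by auto
  qed
qed

theorem lemma4p4:
  fixes n :: nat
  assumes "even n" and "n > 0" and "\<not> (\<exists>k. n = 2 ^ k)"
  defines "c \<equiv> (1/2) * real ((n - 1) choose (n div 2))"
  defines "M \<equiv> 2 ^ (n - 2) - c"
  defines "S \<equiv> {(\<lambda>i. p i - gV n i - c * ones n i) | p. p \<in> PV n}"
  shows "(\<lambda>i. 0) \<in> S \<and> S \<subseteq> KM n M"
proof -
  obtain m where m: "odd m" "3 \<le> m" "m dvd n" using odd_divisor_exists assms(2,3) by blast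
  interpret cfg n m using assms(1,2) m by unfold_locales auto
  have zero_out: "v i = 0" if "v \<in> Vset n" "i \<notin> {1..n}" for v i
    using that unfolding Vset_def by auto
  have gV_out: "gV n i = 0" if "i \<notin> {1..n}" for i
    unfolding gV_def using zero_out[OF _ that] by (simp add: sum.neutral)
  have finV: "finite (Vset n)"
    using card_Vset by (metis card.infinite power_not_zero zero_neq_numeral)
  have part1: "(\<lambda>i. 0) \<in> S"
  proof -
    define p where "p = (\<lambda>i. \<Sum>v\<in>vec ` Wfam. v i)"
    have pP: "p \<in> PV n" unfolding PV_def p_def using W_sub by blast
    have "(\<lambda>i. 0::real) = (\<lambda>i. p i - gV n i - c * ones n i)"
    proof
      fix i
      show "0 = p i - gV n i - c * ones n i"
      proof (cases "i \<in> {1..n}")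
        case True
        then show ?thesis unfolding p_def c_def ones_def using sum_W[OF True] by simp
      next
        case False
        have "p i = 0" unfolding p_def using W_sub zero_out[OF _ False] by (intro sum.neutral) auto
        then show ?thesis using False gV_out[OF False] unfolding ones_def by auto
      qed
    qed
    then show ?thesis unfolding S_def using pP by blast
  qed
  have part2: "S \<subseteq> KM n M"
  proof
    fix x assume "x \<in> S"
    then obtain p where p: "p \<in> PV n" "x = (\<lambda>i. p i - gV n i - c * ones n i)" unfolding S_def by blast
    then obtain W where W: "W \<subseteq> Vset n" "p = (\<lambda>i. \<Sum>v\<in>W. v i)" unfolding PV_def by blast
    have finW: "finite W" using W finV finite_subset by blast
    show "x \<in> KM n M" unfolding KM_def
    proof (intro CollectI ballI)
      fix i assume i: "i \<in> {1..n}"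
      have pm: "v i = 1 \<or> v i = -1" if "v \<in> Vset n" for v using that i unfolding Vset_def by auto
      define P where "P = (\<Sum>v\<in>Vset n. if v i = 1 then 1 else (0::real))"
      have "(\<Sum>v\<in>W. v i) \<le> (\<Sum>v\<in>W. if v i = 1 then 1 else (0::real))"
      proof (rule sum_mono)
        fix v assume "v \<in> W"
        then have "v i = 1 \<or> v i = -1" using pm W(1) by blast
        then show "v i \<le> (if v i = 1 then 1 else 0)" by auto
      qed
      also have "\<dots> \<le> P" unfolding P_def by (rule sum_mono2[OF finV W(1)]) auto
      finally have s1: "(\<Sum>v\<in>W. v i) \<le> P" .
      have "(\<Sum>v\<in>Vset n. v i) = (\<Sum>v\<in>Vset n. 2 * (if v i = 1 then 1 else 0) - 1)"
        by (rule sum.cong) (use pm in auto)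
      also have "\<dots> = 2 * P - real (card (Vset n))"
        unfolding P_def by (simp add: sum_subtractf sum_distrib_left)
      finally have g: "gV n i = P - real (card (Vset n)) / 2" unfolding gV_def by simp
      have n2: "n \<ge> 2" using assms(1,2) by (auto elim: evenE)
      have "real (card (Vset n)) / 2 = 2 ^ (n - 2)"
      proof -
        have "(2::real) ^ (n - 1) = 2 * 2 ^ (n - 2)" using n2
          by (metis Suc_diff_Suc Suc_1 diff_Suc_1 less_le_trans lessI power_Suc)
        then show ?thesis unfolding card_Vset by simp
      qed
      then have "x i \<le> 2 ^ (n - 2) - c" using s1 g p(2) W(2) i unfolding ones_def by simp
      then show "x i \<le> M" unfolding M_def .
    qed
  qed
  show ?thesis using part1 part2 by blast
qed

end
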